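(* Let $n\ge2$, let $a,b\in H_n\rtimes S_n$ satisfy $\sigma_a=\sigma_b$, and let $x\in H_n$ with $x^{-1}ax=b$. Let $[k]_a$ be a class of size $q$, let $i_1\in[k]_a$ and $i_s=i_1\sigma_a^{s-1}$ for $1\le s\le q$. Then for all $1\le s\le q$, $$t_{i_s}(x)=t_{i_1}(x)+\sum_{d=1}^{s-1}\big(t_{i_d}(\omega_b)-t_{i_d}(\omega_a)\big).$$ In particular the values $t_i(x)$, $i\in[k]_a$, are determined by $t_{i_1}(x)$ and the numbers $t_i(a),t_i(b)$, $i\in[k]_a$.
   Context: $\mathbb{N}=\{1,2,\dots\}$, $X_n=\{1,\dots,n\}\times\mathbb{N}$, permutations act on the right. $H_n$ is the group of bijections $g$ of $X_n$ with $z_i(g)\in\mathbb{N}$, $t_i(g)\in\mathbb{Z}$ such that $(i,m)g=(i,m+t_i(g))$ for all $m\ge z_i(g)$. $S_n$ acts by $(i,m)\sigma=(i\sigma,m)$, and $H_n\rtimes S_n\le\mathrm{Sym}(X_n)$ is generated by $H_n$ and these; each $g\in H_n\rtimes S_n$ is uniquely $g=\omega_g\sigma_g$ with $\omega_g\in H_n$, $\sigma_g\in S_n$, and $t_i(g):=t_i(\omega_g)$. The class $[i]_g$ is the orbit of $i$ under $\langle\sigma_g\rangle$. *)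

theory Defs
  imports "HOL-Combinatorics.Permutations"
begin

text \<open>Elements of Sym(X_n) are
  represented as functions on nat x nat that permute X_n (identity outside).
  Permutations act on the right: the product g h (first g, then h) is h o g.\<close>

definition Xn :: "nat \<Rightarrow> (nat \<times> nat) set" where
  "Xn n = {1..n} \<times> {1..}"

definition shifts_by :: "(nat \<times> nat \<Rightarrow> nat \<times> nat) \<Rightarrow> nat \<Rightarrow> int \<Rightarrow> bool" where
  "shifts_by g i t \<longleftrightarrow> (\<exists>z::nat. \<forall>m\<ge>z.
      fst (g (i, m)) = i \<and> int (snd (g (i, m))) = int m + t)"

definition Hn :: "nat \<Rightarrow> (nat \<times> nat \<Rightarrow> nat \<times> nat) set" where
  "Hn n = {g. g permutes Xn n \<and> (\<forall>i\<in>{1..n}. \<exists>t. shifts_by g i t)}"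

definition tr :: "(nat \<times> nat \<Rightarrow> nat \<times> nat) \<Rightarrow> nat \<Rightarrow> int" where
  "tr g i = (THE t. shifts_by g i t)"

definition liftS :: "nat \<Rightarrow> (nat \<Rightarrow> nat) \<Rightarrow> nat \<times> nat \<Rightarrow> nat \<times> nat" where
  "liftS n \<sigma> p = (if p \<in> Xn n then (\<sigma> (fst p), snd p) else p)"

definition HSn :: "nat \<Rightarrow> (nat \<times> nat \<Rightarrow> nat \<times> nat) set" where
  "HSn n = {g. \<exists>\<omega> \<sigma>. \<omega> \<in> Hn n \<and> \<sigma> permutes {1..n} \<and> g = liftS n \<sigma> \<circ> \<omega>}"

definition sigma_of :: "nat \<Rightarrow> (nat \<times> nat \<Rightarrow> nat \<times> nat) \<Rightarrow> nat \<Rightarrow> nat" where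
  "sigma_of n g = (THE \<sigma>. \<sigma> permutes {1..n} \<and> (\<exists>\<omega>\<in>Hn n. g = liftS n \<sigma> \<circ> \<omega>))"

definition omega_of :: "nat \<Rightarrow> (nat \<times> nat \<Rightarrow> nat \<times> nat) \<Rightarrow> nat \<times> nat \<Rightarrow> nat \<times> nat" where
  "omega_of n g = (THE \<omega>. \<omega> \<in> Hn n \<and> (\<exists>\<sigma>. \<sigma> permutes {1..n} \<and> g = liftS n \<sigma> \<circ> \<omega>))"

definition cls :: "nat \<Rightarrow> (nat \<times> nat \<Rightarrow> nat \<times> nat) \<Rightarrow> nat \<Rightarrow> nat set" where
  "cls n g i = {(sigma_of n g ^^ j) i | j. True}"

end

theory Submission
  imports Defs
begin

lemma shifts_unique:
  assumes "shifts_by g i t" "shifts_by g i t'" shows "t = t'"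
proof -
  obtain z where z: "\<forall>m\<ge>z. fst (g (i, m)) = i \<and> int (snd (g (i, m))) = int m + t"
    using assms(1) unfolding shifts_by_def by blast
  obtain z' where z': "\<forall>m\<ge>z'. fst (g (i, m)) = i \<and> int (snd (g (i, m))) = int m + t'"
    using assms(2) unfolding shifts_by_def by blast
  have "int (snd (g (i, max z z'))) = int (max z z') + t"
       "int (snd (g (i, max z z'))) = int (max z z') + t'"
    using z[rule_format, of "max z z'"] z'[rule_format, of "max z z'"] by auto
  thus ?thesis by simp
qed

lemma tr_eq: "shifts_by g i t \<Longrightarrow> tr g i = t"
  unfolding tr_def using shifts_unique by blast

lemma Hn_tr: "g \<in> Hn n \<Longrightarrow> i \<in> {1..n} \<Longrightarrow> shifts_by g i (tr g i)"
  unfolding Hn_def using tr_eq by blast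

lemma Xn_mem: "p \<in> Xn n \<longleftrightarrow> fst p \<in> {1..n} \<and> snd p \<ge> 1"
  by (cases p) (auto simp: Xn_def)

lemma liftS_in: "p \<in> Xn n \<Longrightarrow> liftS n \<sigma> p = (\<sigma> (fst p), snd p)"
  by (simp add: liftS_def)

lemma liftS_out: "p \<notin> Xn n \<Longrightarrow> liftS n \<sigma> p = p"
  by (simp add: liftS_def)

lemma liftS_inj:
  assumes "\<sigma> permutes {1..n}" shows "inj (liftS n \<sigma>)"
proof (rule injI)
  fix p q assume eq: "liftS n \<sigma> p = liftS n \<sigma> q"
  have inS: "\<And>j. j \<in> {1..n} \<Longrightarrow> \<sigma> j \<in> {1..n}" by (rule permutes_in_image[OF assms, THEN iffD2])
  have ij: "inj \<sigma>" using assms permutes_inj by blast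
  have img: "\<And>r. r \<in> Xn n \<Longrightarrow> (\<sigma> (fst r), snd r) \<in> Xn n"
    using inS unfolding Xn_mem by simp
  show "p = q"
  proof (cases "p \<in> Xn n")
    case pin: True
    show ?thesis
    proof (cases "q \<in> Xn n")
      case True
      have "(\<sigma> (fst p), snd p) = (\<sigma> (fst q), snd q)"
        using eq liftS_in[OF pin] liftS_in[OF True] by metis
      hence "\<sigma> (fst p) = \<sigma> (fst q)" "snd p = snd q" by simp_all
      hence "fst p = fst q" "snd p = snd q" using ij by (simp_all add: inj_eq)
      then show ?thesis by (simp add: prod_eq_iff)
    next
      case False
      have "q = (\<sigma> (fst p), snd p)" using eq liftS_in[OF pin] liftS_out[OF False] by metis
      then show ?thesis using False img[OF pin] by simp
    qed
  next
    case pout: False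
    show ?thesis
    proof (cases "q \<in> Xn n")
      case True
      have "p = (\<sigma> (fst q), snd q)" using eq liftS_in[OF True] liftS_out[OF pout] by metis
      then show ?thesis using pout img[OF True] by simp
    next
      case False
      show ?thesis using eq liftS_out[OF pout] liftS_out[OF False] by metis
    qed
  qed
qed

lemma decomp_unique:
  assumes w: "\<omega> \<in> Hn n" and w': "\<omega>' \<in> Hn n" and s: "\<sigma> permutes {1..n}"
    and s': "\<sigma>' permutes {1..n}" and eq: "liftS n \<sigma> \<circ> \<omega> = liftS n \<sigma>' \<circ> \<omega>'"
  shows "\<sigma> = \<sigma>' \<and> \<omega> = \<omega>'"
proof -
  have "\<sigma> i = \<sigma>' i" for i
  proof (cases "i \<in> {1..n}")
    case False
    then show ?thesis using s s' by (simp add: permutes_not_in)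
  next
    case True
    obtain z where z: "\<forall>m\<ge>z. fst (\<omega> (i, m)) = i \<and> int (snd (\<omega> (i, m))) = int m + tr \<omega> i"
      using Hn_tr[OF w True] unfolding shifts_by_def by blast
    obtain z' where z': "\<forall>m\<ge>z'. fst (\<omega>' (i, m)) = i \<and> int (snd (\<omega>' (i, m))) = int m + tr \<omega>' i"
      using Hn_tr[OF w' True] unfolding shifts_by_def by blast
    define m where "m = max (max z z') 1"
    have pm: "(i, m) \<in> Xn n" using True by (auto simp: Xn_def m_def)
    have p1: "\<omega> permutes Xn n" "\<omega>' permutes Xn n" using w w' by (auto simp: Hn_def)
    have X1: "\<omega> (i,m) \<in> Xn n" "\<omega>' (i,m) \<in> Xn n" using permutes_in_image[OF p1(1), THEN iffD2, OF pm] permutes_in_image[OF p1(2), THEN iffD2, OF pm] by auto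
    have f1: "fst (\<omega> (i,m)) = i" "fst (\<omega>' (i,m)) = i" using z z' by (auto simp: m_def)
    have "liftS n \<sigma> (\<omega> (i,m)) = liftS n \<sigma>' (\<omega>' (i,m))" using eq by (metis comp_apply)
    then show ?thesis using X1 f1 by (simp add: liftS_def)
  qed
  hence ss: "\<sigma> = \<sigma>'" by auto
  have "\<omega> p = \<omega>' p" for p
  proof -
    have "liftS n \<sigma> (\<omega> p) = liftS n \<sigma> (\<omega>' p)" using eq ss by (metis comp_apply)
    thus ?thesis using liftS_inj[OF s] by (simp add: inj_eq)
  qed
  thus ?thesis using ss by auto
qed

lemma HSn_decomp:
  assumes "g \<in> HSn n"
  shows "sigma_of n g permutes {1..n} \<and> omega_of n g \<in> Hn n
         \<and> g = liftS n (sigma_of n g) \<circ> omega_of n g"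
proof -
  obtain \<omega> \<sigma> where h: "\<omega> \<in> Hn n" "\<sigma> permutes {1..n}" "g = liftS n \<sigma> \<circ> \<omega>"
    using assms unfolding HSn_def by blast
  have "sigma_of n g = \<sigma>"
    unfolding sigma_of_def
  proof (rule the_equality)
    show "\<sigma> permutes {1..n} \<and> (\<exists>\<omega>\<in>Hn n. g = liftS n \<sigma> \<circ> \<omega>)" using h by blast
  next
    fix s assume "s permutes {1..n} \<and> (\<exists>\<omega>\<in>Hn n. g = liftS n s \<circ> \<omega>)"
    then show "s = \<sigma>" using decomp_unique h by metis
  qed
  moreover have "omega_of n g = \<omega>"
    unfolding omega_of_def
  proof (rule the_equality)
    show "\<omega> \<in> Hn n \<and> (\<exists>\<sigma>. \<sigma> permutes {1..n} \<and> g = liftS n \<sigma> \<circ> \<omega>)" using h by blast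
  next
    fix w assume "w \<in> Hn n \<and> (\<exists>\<sigma>. \<sigma> permutes {1..n} \<and> g = liftS n \<sigma> \<circ> w)"
    then show "w = \<omega>" using decomp_unique h by metis
  qed
  ultimately show ?thesis using h by simp
qed

lemma step:
  assumes x: "x \<in> Hn n" and wa: "wa \<in> Hn n" and wb: "wb \<in> Hn n"
    and s: "\<sigma> permutes {1..n}"
    and eq: "x \<circ> (liftS n \<sigma> \<circ> wa) = liftS n \<sigma> \<circ> wb \<circ> x"
    and i: "i \<in> {1..n}"
  shows "tr x (\<sigma> i) = tr x i + (tr wb i - tr wa i)"
proof -
  have si: "\<sigma> i \<in> {1..n}" using permutes_in_image[OF s, THEN iffD2, OF i] .
  obtain zx where zx: "\<forall>m\<ge>zx. fst (x (i, m)) = i \<and> int (snd (x (i, m))) = int m + tr x i"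
    using Hn_tr[OF x i] unfolding shifts_by_def by blast
  obtain zy where zy: "\<forall>m\<ge>zy. fst (x (\<sigma> i, m)) = \<sigma> i \<and> int (snd (x (\<sigma> i, m))) = int m + tr x (\<sigma> i)"
    using Hn_tr[OF x si] unfolding shifts_by_def by blast
  obtain za where za: "\<forall>m\<ge>za. fst (wa (i, m)) = i \<and> int (snd (wa (i, m))) = int m + tr wa i"
    using Hn_tr[OF wa i] unfolding shifts_by_def by blast
  obtain zb where zb: "\<forall>m\<ge>zb. fst (wb (i, m)) = i \<and> int (snd (wb (i, m))) = int m + tr wb i"
    using Hn_tr[OF wb i] unfolding shifts_by_def by blast
  define m where "m = zx + zy + za + zb + nat \<bar>tr wa i\<bar> + nat \<bar>tr x i\<bar> + 1"
  have pm: "(i, m) \<in> Xn n" using i by (auto simp: Xn_def m_def)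
  have px: "x permutes Xn n" "wa permutes Xn n" "wb permutes Xn n"
    using x wa wb by (auto simp: Hn_def)
  have a1: "fst (wa (i,m)) = i" "int (snd (wa (i,m))) = int m + tr wa i"
    using za by (auto simp: m_def)
  have a2: "wa (i,m) \<in> Xn n" using permutes_in_image[OF px(2), THEN iffD2, OF pm] .
  define m1 where "m1 = snd (wa (i,m))"
  have wam: "wa (i,m) = (i, m1)" using a1 by (simp add: m1_def prod_eq_iff)
  have l1: "liftS n \<sigma> (wa (i,m)) = (\<sigma> i, m1)" using a2 wam by (simp add: liftS_def)
  have "m1 \<ge> zy" using a1(2) unfolding m1_def m_def by linarith
  hence l2: "int (snd (x (\<sigma> i, m1))) = int m1 + tr x (\<sigma> i)" using zy by blast
  have b1: "fst (x (i,m)) = i" "int (snd (x (i,m))) = int m + tr x i"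
    using zx by (auto simp: m_def)
  have b2: "x (i,m) \<in> Xn n" using permutes_in_image[OF px(1), THEN iffD2, OF pm] .
  define m2 where "m2 = snd (x (i,m))"
  have xm: "x (i,m) = (i, m2)" using b1 by (simp add: m2_def prod_eq_iff)
  have "m2 \<ge> zb" using b1(2) unfolding m2_def m_def by linarith
  hence c1: "fst (wb (i,m2)) = i" "int (snd (wb (i,m2))) = int m2 + tr wb i" using zb by blast+
  have c2: "wb (i,m2) \<in> Xn n" using permutes_in_image[OF px(3), THEN iffD2] b2 xm by simp
  have r: "liftS n \<sigma> (wb (i,m2)) = (\<sigma> i, snd (wb (i,m2)))" using c1 c2 by (simp add: liftS_def)
  have "x (liftS n \<sigma> (wa (i,m))) = liftS n \<sigma> (wb (x (i,m)))" using eq by (metis comp_apply)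
  hence "x (\<sigma> i, m1) = (\<sigma> i, snd (wb (i,m2)))" using l1 xm r by simp
  hence "int m1 + tr x (\<sigma> i) = int m2 + tr wb i" using l2 c1 by simp
  thus ?thesis using a1(2) b1(2) unfolding m1_def m2_def by linarith
qed

theorem lemma3p10:
  fixes n k q i1 :: nat and a b x :: "nat \<times> nat \<Rightarrow> nat \<times> nat"
  assumes "n \<ge> 2"
    and "a \<in> HSn n" and "b \<in> HSn n" and "sigma_of n a = sigma_of n b"
    and "x \<in> Hn n" and "x \<circ> a \<circ> inv x = b"
    and "k \<in> {1..n}" and "card (cls n a k) = q"
    and "i1 \<in> cls n a k"
  shows "\<forall>s\<in>{1..q}.
    tr x ((sigma_of n a ^^ (s - 1)) i1) =
      tr x i1 + (\<Sum>d = 1..s - 1.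
        tr (omega_of n b) ((sigma_of n a ^^ (d - 1)) i1)
        - tr (omega_of n a) ((sigma_of n a ^^ (d - 1)) i1))"
proof -
  define \<sigma> where "\<sigma> = sigma_of n a"
  have da: "\<sigma> permutes {1..n}" "omega_of n a \<in> Hn n" "a = liftS n \<sigma> \<circ> omega_of n a"
    using HSn_decomp[OF assms(2)] by (auto simp: \<sigma>_def)
  have db: "omega_of n b \<in> Hn n" "b = liftS n \<sigma> \<circ> omega_of n b"
    using HSn_decomp[OF assms(3)] assms(4) by (auto simp: \<sigma>_def)
  have xp: "x permutes Xn n" using assms(5) by (simp add: Hn_def)
  have "b \<circ> x = x \<circ> a \<circ> (inv x \<circ> x)" using assms(6) by (simp add: o_assoc)
  hence xab: "x \<circ> a = b \<circ> x" using permutes_inv_o(2)[OF xp] by simp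
  have eq: "x \<circ> (liftS n \<sigma> \<circ> omega_of n a) = liftS n \<sigma> \<circ> omega_of n b \<circ> x"
    using xab da(3) db(2) by simp
  obtain j where j: "i1 = (\<sigma> ^^ j) k" using assms(9) by (auto simp: cls_def \<sigma>_def)
  have pw: "\<And>j i. i \<in> {1..n} \<Longrightarrow> (\<sigma> ^^ j) i \<in> {1..n}"
  proof -
    fix j i assume "i \<in> {1..n}" thus "(\<sigma> ^^ j) i \<in> {1..n}"
    proof (induction j)
      case 0 then show ?case by simp
    next
      case (Suc j)
      have "\<sigma> ((\<sigma> ^^ j) i) \<in> {1..n}" by (rule permutes_in_image[OF da(1), THEN iffD2, OF Suc.IH[OF Suc.prems]])
      then show ?case by simp
    qed
  qed
  have i1: "i1 \<in> {1..n}" using j pw assms(7) by simp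
  have main: "tr x ((\<sigma> ^^ s) i1) = tr x i1 + (\<Sum>d = 1..s.
        tr (omega_of n b) ((\<sigma> ^^ (d - 1)) i1) - tr (omega_of n a) ((\<sigma> ^^ (d - 1)) i1))" for s
  proof (induction s)
    case 0 then show ?case by simp
  next
    case (Suc s)
    have "tr x ((\<sigma> ^^ Suc s) i1) = tr x ((\<sigma> ^^ s) i1)
        + (tr (omega_of n b) ((\<sigma> ^^ s) i1) - tr (omega_of n a) ((\<sigma> ^^ s) i1))"
      using step[OF assms(5) da(2) db(1) da(1) eq pw[OF i1]] by simp
    then show ?case using Suc by simp
  qed
  show ?thesis using main unfolding \<sigma>_def by blast
qed

end
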